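(* Let $\phi\ge1$ and let $w_1,\ldots,w_n$ be independent random variables, each $w_i$ uniformly distributed on an arbitrary interval $A_i\subseteq[0,1]$ of length $1/\phi$. For $k\in\mathbb{N}$ let $\mathcal{F}_k$ denote the event that there exist two different vectors $x,y\in\{0,1\}^n$ with $|w^{\mathsf T}x-w^{\mathsf T}y|\le n/k$. Then for every $k\in\mathbb{N}$, $\Pr[\mathcal{F}_k]\le \frac{2^{2n+1}n\phi}{k}$. *)

theory Defs
  imports "HOL-Probability.Probability"
begin

end

theory Submission
  imports Defs
begin

lemma unif_prob:
  assumes "\<phi> \<ge> 1"
  shows "prob_space (uniform_measure lborel {b .. b + 1 / (\<phi>::real)})"
  using assms by (intro prob_space_uniform_measure) (auto simp: emeasure_lborel_Icc_eq)

lemma unif_interval: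
  assumes "\<phi> \<ge> 1" "t \<ge> 0"
  shows "emeasure (uniform_measure lborel {b .. b + 1 / (\<phi>::real)}) {p - t .. p + t} \<le> ennreal (2 * t * \<phi>)"
proof -
  have "emeasure (uniform_measure lborel {b .. b + 1 / \<phi>}) {p - t .. p + t}
     = emeasure lborel ({b .. b + 1 / \<phi>} \<inter> {p - t .. p + t}) / emeasure lborel {b .. b + 1 / \<phi>}"
    by simp
  also have "\<dots> \<le> emeasure lborel {p - t .. p + t} / emeasure lborel {b .. b + 1 / \<phi>}"
    by (intro divide_right_mono_ennreal emeasure_mono) auto
  also have "\<dots> = ennreal (2 * t) / ennreal (1 / \<phi>)"
    using assms by (simp add: emeasure_lborel_Icc_eq)
  also have "\<dots> = ennreal (2 * t * \<phi>)"
    using assms by (subst divide_ennreal) auto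
  finally show ?thesis .
qed

lemma pair_bound:
  fixes a c :: "nat \<Rightarrow> real"
  assumes phi: "\<phi> \<ge> 1" and t: "t \<ge> 0" and j: "j < n" and cj: "c j = 1 \<or> c j = -1"
  shows "emeasure (PiM {..<n} (\<lambda>i. uniform_measure lborel {a i .. a i + 1 / \<phi>}))
     {v \<in> space (PiM {..<n} (\<lambda>i. uniform_measure lborel {a i .. a i + 1 / \<phi>})).
        \<bar>\<Sum>i<n. v i * c i\<bar> \<le> t} \<le> ennreal (2 * t * \<phi>)"
proof -
  define U where "U = (\<lambda>i. uniform_measure lborel {a i .. a i + 1 / \<phi>})"
  have pU: "prob_space (U i)" for i unfolding U_def using phi by (rule unif_prob)
  interpret product_prob_space U "{..<n}"
    by (auto simp: product_prob_space_def product_prob_space_axioms_def product_sigma_finite_def pU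
          prob_space_imp_sigma_finite)
  define I' where "I' = {..<n} - {j}"
  have ins: "{..<n} = insert j I'" using j by (auto simp: I'_def)
  have jI: "j \<notin> I'" "finite I'" by (auto simp: I'_def)
  define B where "B = {v \<in> space (PiM {..<n} U). \<bar>\<Sum>i<n. v i * c i\<bar> \<le> t}"
  have Bs: "B \<in> sets (PiM {..<n} U)" unfolding B_def U_def by measurable
  have "emeasure (PiM {..<n} U) B = (\<integral>\<^sup>+ v. indicator B v \<partial>PiM (insert j I') U)"
    using Bs ins by simp
  also have "\<dots> = (\<integral>\<^sup>+ x. (\<integral>\<^sup>+ y. indicator B (x(j := y)) \<partial>(U j)) \<partial>(PiM I' U))"
    using Bs ins jI by (intro product_nn_integral_insert) auto
  also have "\<dots> \<le> (\<integral>\<^sup>+ x. ennreal (2 * t * \<phi>) \<partial>(PiM I' U))"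
  proof (intro nn_integral_mono)
    fix x assume x: "x \<in> space (PiM I' U)"
    define s where "s = (\<Sum>i\<in>I'. x i * c i)"
    have "(\<integral>\<^sup>+ y. indicator B (x(j := y)) \<partial>(U j)) \<le> (\<integral>\<^sup>+ y. indicator {- s * c j - t .. - s * c j + t} y \<partial>(U j))"
    proof (intro nn_integral_mono)
      fix y
      have sum: "(\<Sum>i<n. (x(j := y)) i * c i) = y * c j + s"
        unfolding ins s_def using jI by (simp add: sum.insert) (intro sum.cong, auto)
      have "x(j := y) \<in> B \<Longrightarrow> y \<in> {- s * c j - t .. - s * c j + t}"
      proof -
        assume "x(j := y) \<in> B"
        then have "\<bar>y * c j + s\<bar> \<le> t" unfolding B_def using sum by (simp del: fun_upd_apply)
        then show ?thesis using cj by (auto simp: abs_le_iff)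
      qed
      then show "indicator B (x(j := y)) \<le> (indicator {- s * c j - t .. - s * c j + t} y :: ennreal)"
        by (auto simp: indicator_def)
    qed
    also have "\<dots> = emeasure (U j) {- s * c j - t .. - s * c j + t}"
      by (simp add: U_def)
    also have "\<dots> \<le> ennreal (2 * t * \<phi>)"
      unfolding U_def by (intro unif_interval phi t)
    finally show "(\<integral>\<^sup>+ y. indicator B (x(j := y)) \<partial>(U j)) \<le> ennreal (2 * t * \<phi>)" .
  qed
  also have "\<dots> = ennreal (2 * t * \<phi>)"
    using prob_space.emeasure_space_1[OF prob_space_PiM[of I' U]] pU by simp
  finally show ?thesis unfolding B_def U_def .
qed

lemma pair_measure_bound:
  fixes a :: "nat \<Rightarrow> real" and x y :: "nat \<Rightarrow> nat"
  assumes phi: "\<phi> \<ge> 1" and t: "t \<ge> 0"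
    and x: "x \<in> {..<n} \<rightarrow>\<^sub>E {0::nat, 1}" and y: "y \<in> {..<n} \<rightarrow>\<^sub>E {0::nat, 1}"
  shows "measure (PiM {..<n} (\<lambda>i. uniform_measure lborel {a i .. a i + 1 / \<phi>}))
     {v \<in> space (PiM {..<n} (\<lambda>i. uniform_measure lborel {a i .. a i + 1 / \<phi>})). x \<noteq> y \<and>
        \<bar>(\<Sum>i<n. v i * real (x i)) - (\<Sum>i<n. v i * real (y i))\<bar> \<le> t} \<le> 2 * t * \<phi>"
proof (cases "x = y")
  case True
  then show ?thesis using phi t by simp
next
  case False
  define U where "U = (\<lambda>i. uniform_measure lborel {a i .. a i + 1 / \<phi>})"
  have pU: "prob_space (U i)" for i unfolding U_def using phi by (rule unif_prob)
  interpret P: prob_space "PiM {..<n} U" using pU by (intro prob_space_PiM) auto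
  obtain j where j: "x j \<noteq> y j" using False by auto
  have jn: "j < n" using j x y by (auto simp: PiE_def extensional_def) (metis lessThan_iff)
  define c where "c = (\<lambda>i. real (x i) - real (y i))"
  have cj: "c j = 1 \<or> c j = -1" proof -
    have "x j \<in> {0,1}" "y j \<in> {0,1}" using x y jn by auto
    then show ?thesis using j unfolding c_def by auto
  qed
  have eq: "{v \<in> space (PiM {..<n} U). x \<noteq> y \<and>
        \<bar>(\<Sum>i<n. v i * real (x i)) - (\<Sum>i<n. v i * real (y i))\<bar> \<le> t}
     = {v \<in> space (PiM {..<n} U). \<bar>\<Sum>i<n. v i * c i\<bar> \<le> t}"
    using False by (auto simp: c_def sum_subtractf[symmetric] right_diff_distrib)
  have "emeasure (PiM {..<n} U) {v \<in> space (PiM {..<n} U). \<bar>\<Sum>i<n. v i * c i\<bar> \<le> t}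
      \<le> ennreal (2 * t * \<phi>)"
    unfolding U_def by (rule pair_bound[where c=c and a=a, OF phi t jn cj])
  then have "ennreal (measure (PiM {..<n} U) {v \<in> space (PiM {..<n} U). \<bar>\<Sum>i<n. v i * c i\<bar> \<le> t})
      \<le> ennreal (2 * t * \<phi>)"
    by (simp only: P.emeasure_eq_measure)
  then show ?thesis using phi t unfolding U_def[symmetric] eq by (simp add: ennreal_le_iff)
qed

theorem lemma2p3:
  fixes M :: "'s measure" and w :: "nat \<Rightarrow> 's \<Rightarrow> real"
    and a :: "nat \<Rightarrow> real" and \<phi> :: real and n k :: nat
  assumes "prob_space M"
    and "\<phi> \<ge> 1"
    and "prob_space.indep_vars M (\<lambda>_. borel) w {..<n}"
    and "\<And>i. i < n \<Longrightarrow> 0 \<le> a i \<and> a i + 1 / \<phi> \<le> 1"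
    and "\<And>i. i < n \<Longrightarrow>
           distr M lborel (w i) = uniform_measure lborel {a i .. a i + 1 / \<phi>}"
    and "k \<ge> 1"
  shows "measure M {\<omega> \<in> space M. \<exists>x \<in> {..<n} \<rightarrow>\<^sub>E {0::nat, 1}. \<exists>y \<in> {..<n} \<rightarrow>\<^sub>E {0, 1}.
            x \<noteq> y \<and>
            \<bar>(\<Sum>i<n. w i \<omega> * real (x i)) - (\<Sum>i<n. w i \<omega> * real (y i))\<bar> \<le> real n / real k}
         \<le> 2 ^ (2 * n + 1) * real n * \<phi> / real k"
proof (cases "n = 0")
  case True
  then show ?thesis by simp
next
  case False
  interpret prob_space M by fact
  note phi = assms(2)
  define t where "t = real n / real k"
  have t: "t \<ge> 0" by (simp add: t_def)
  define U where "U = (\<lambda>i. uniform_measure lborel {a i .. a i + 1 / \<phi>})"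
  have pU: "prob_space (U i)" for i unfolding U_def using phi by (rule unif_prob)
  interpret P: prob_space "PiM {..<n} U" using pU by (intro prob_space_PiM) auto
  define S where "S = {..<n} \<rightarrow>\<^sub>E {0::nat, 1}"
  have finS: "finite S" unfolding S_def by (intro finite_PiE) auto
  have cardS: "card S = 2 ^ n" unfolding S_def by (simp add: card_PiE numeral_2_eq_2)
  define C where "C = (\<lambda>(x, y). {v \<in> space (PiM {..<n} U). x \<noteq> y \<and>
        \<bar>(\<Sum>i<n. v i * real (x i)) - (\<Sum>i<n. v i * real (y i))\<bar> \<le> t})"
  define X where "X = (\<lambda>\<omega>. \<lambda>i\<in>{..<n}. w i \<omega>)"
  have rv: "random_variable borel (w i)" if "i < n" for i
    using assms(3) that unfolding indep_vars_def by auto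
  have "distr M (PiM {..<n} (\<lambda>_. borel)) X = PiM {..<n} (\<lambda>i. distr M borel (w i))"
    unfolding X_def using assms(3) False rv by (subst indep_vars_iff_distr_eq_PiM'[symmetric]) auto
  also have "\<dots> = PiM {..<n} U"
  proof (intro PiM_cong refl)
    fix i assume "i \<in> {..<n}"
    then have "distr M borel (w i) = distr M lborel (w i)" by (intro distr_cong) auto
    then show "distr M borel (w i) = U i" using assms(5) \<open>i \<in> {..<n}\<close> by (simp add: U_def)
  qed
  finally have dist: "distr M (PiM {..<n} (\<lambda>_. borel)) X = PiM {..<n} U" .
  have Xm: "X \<in> measurable M (PiM {..<n} (\<lambda>_. borel))"
    unfolding X_def using rv by (intro measurable_restrict) auto
  have Cs: "C p \<in> sets (PiM {..<n} U)" for p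
    unfolding C_def U_def by (cases p) (simp only: case_prod_conv, measurable)
  have sp: "space (PiM {..<n} U) = space (PiM {..<n} (\<lambda>_. borel))"
    by (simp add: U_def space_PiM)
  have "{\<omega> \<in> space M. \<exists>x \<in> {..<n} \<rightarrow>\<^sub>E {0::nat, 1}. \<exists>y \<in> {..<n} \<rightarrow>\<^sub>E {0, 1}.
            x \<noteq> y \<and>
            \<bar>(\<Sum>i<n. w i \<omega> * real (x i)) - (\<Sum>i<n. w i \<omega> * real (y i))\<bar> \<le> real n / real k}
      = X -` (\<Union>p\<in>S \<times> S. C p) \<inter> space M"
  proof -
    have e: "(\<Sum>i<n. X \<omega> i * r i) = (\<Sum>i<n. w i \<omega> * r i)" for \<omega> and r :: "nat \<Rightarrow> real"
      unfolding X_def by (intro sum.cong) auto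
    have xs: "X \<omega> \<in> space (PiM {..<n} U)" for \<omega>
      unfolding X_def U_def by (simp add: space_PiM)
    show ?thesis
    proof (intro set_eqI iffI)
      fix \<omega> assume "\<omega> \<in> {\<omega> \<in> space M. \<exists>x \<in> {..<n} \<rightarrow>\<^sub>E {0::nat, 1}. \<exists>y \<in> {..<n} \<rightarrow>\<^sub>E {0, 1}.
            x \<noteq> y \<and>
            \<bar>(\<Sum>i<n. w i \<omega> * real (x i)) - (\<Sum>i<n. w i \<omega> * real (y i))\<bar> \<le> real n / real k}"
      then obtain x y where "\<omega> \<in> space M" "x \<in> S" "y \<in> S" "x \<noteq> y"
        "\<bar>(\<Sum>i<n. w i \<omega> * real (x i)) - (\<Sum>i<n. w i \<omega> * real (y i))\<bar> \<le> t"
        unfolding S_def t_def by blast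
      then show "\<omega> \<in> X -` (\<Union>p\<in>S \<times> S. C p) \<inter> space M"
        using xs[of \<omega>] by (intro IntI vimageI2 UN_I[of "(x, y)"]) (auto simp: C_def e)
    next
      fix \<omega> assume "\<omega> \<in> X -` (\<Union>p\<in>S \<times> S. C p) \<inter> space M"
      then obtain x y where "\<omega> \<in> space M" "x \<in> S" "y \<in> S" "X \<omega> \<in> C (x, y)" by auto
      then have "\<omega> \<in> space M" "x \<in> S" "y \<in> S" "x \<noteq> y"
        "\<bar>(\<Sum>i<n. w i \<omega> * real (x i)) - (\<Sum>i<n. w i \<omega> * real (y i))\<bar> \<le> t"
        by (auto simp: C_def e)
      then show "\<omega> \<in> {\<omega> \<in> space M. \<exists>x \<in> {..<n} \<rightarrow>\<^sub>E {0::nat, 1}. \<exists>y \<in> {..<n} \<rightarrow>\<^sub>E {0, 1}.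
            x \<noteq> y \<and>
            \<bar>(\<Sum>i<n. w i \<omega> * real (x i)) - (\<Sum>i<n. w i \<omega> * real (y i))\<bar> \<le> real n / real k}"
        unfolding S_def t_def by blast
    qed
  qed
  also have "measure M \<dots> = measure (PiM {..<n} U) (\<Union>p\<in>S \<times> S. C p)"
  proof -
    have setsU: "sets (PiM {..<n} U) = sets (PiM {..<n} (\<lambda>_. borel))"
      by (intro sets_PiM_cong) (auto simp: U_def)
    have Bs: "(\<Union>p\<in>S \<times> S. C p) \<in> sets (PiM {..<n} (\<lambda>_. borel))"
      unfolding setsU[symmetric] using Cs finS by (intro sets.finite_UN) auto
    have "measure M (X -` (\<Union>p\<in>S \<times> S. C p) \<inter> space M)
        = measure (distr M (PiM {..<n} (\<lambda>_. borel)) X) (\<Union>p\<in>S \<times> S. C p)"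
      by (rule measure_distr[OF Xm Bs, symmetric])
    also have "\<dots> = measure (PiM {..<n} U) (\<Union>p\<in>S \<times> S. C p)"
      by (simp only: dist)
    finally show ?thesis .
  qed
  also have "\<dots> \<le> (\<Sum>p\<in>S \<times> S. measure (PiM {..<n} U) (C p))"
    using Cs finS by (intro P.finite_measure_subadditive_finite) auto
  also have "\<dots> \<le> (\<Sum>p\<in>S \<times> S. 2 * t * \<phi>)"
  proof (intro sum_mono)
    fix p assume "p \<in> S \<times> S"
    then obtain x y where p: "p = (x, y)" and xy: "x \<in> S" "y \<in> S" by auto
    show "measure (PiM {..<n} U) (C p) \<le> 2 * t * \<phi>"
      unfolding p C_def U_def using xy unfolding S_def
      by (simp only: case_prod_conv) (rule pair_measure_bound[OF phi t])
  qed
  also have "\<dots> = real (2 ^ n * 2 ^ n) * (2 * t * \<phi>)"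
    by (simp only: sum_constant card_cartesian_product cardS)
  also have "\<dots> = 2 ^ (2 * n + 1) * real n * \<phi> / real k"
  proof -
    have h: "(2::real) ^ (2 * n + 1) = 2 ^ n * 2 ^ n * 2"
      by (simp only: power_add power_one_right mult_2)
    show ?thesis unfolding h t_def
      by (simp only: of_nat_mult of_nat_power of_nat_numeral) (simp add: divide_simps)
  qed
  finally show ?thesis .
qed

end
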